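(* Let $\psi\in C_b(\mathbb{R})$, $u>0$, and $\eta>0$. Define \[ r_\eta(\theta):=\frac{\eta-\sqrt{\eta^2+4\sin^2\theta}}{2\sin\theta},\qquad E_\eta(\theta):=\Big(r_\eta(\theta)+\frac{1}{r_\eta(\theta)}\Big)\cos\theta,\qquad \theta\in(-\pi,0). \] Then \[ \int_{\mathbb{R}}\frac{1}{\pi}\operatorname{Im}\Big\{\frac{2u^2m(x+i\eta)m'(x+i\eta)}{1-u^2m^2(x+i\eta)}\Big\}\psi(x)\,\mathrm{d}x=-\frac{1}{\pi}\int_{-\pi}^0\psi\big(E_\eta(\theta)\big)\frac{\mathrm{d}}{\mathrm{d}\theta}\arg\big\{1-u^2r_\eta^2(\theta)e^{2i\theta}\big\}\,\mathrm{d}\theta. \]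
   Context: $m(z)=\frac{z-\sqrt{z^2-4}}{2}$ is the Stieltjes transform of the semicircle law on $[-2,2]$ (satisfying $m(z)=1/(z-m(z))$, $|m(z)|<1$ off the real line). $\arg$ denotes the principal argument with values in $(-\pi,\pi]$. $C_b(\mathbb{R})$ is the space of bounded continuous functions on $\mathbb{R}$. *)

theory Defs
  imports "HOL-Analysis.Analysis"
begin

text \<open>Stieltjes transform of the semicircle law, m(z) = (z - sqrt(z^2-4))/2, with the
branch of the square root chosen so that |m z| < 1 off the real line
(sqrt(z^2-4) realised as csqrt(z-2) * csqrt(z+2), cut along [-2,2]).\<close>
definition msc :: "complex \<Rightarrow> complex" where
  "msc z = (z - csqrt (z - 2) * csqrt (z + 2)) / 2"

definition r_eta :: "real \<Rightarrow> real \<Rightarrow> real" where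
  "r_eta \<eta> \<theta> = (\<eta> - sqrt (\<eta>\<^sup>2 + 4 * (sin \<theta>)\<^sup>2)) / (2 * sin \<theta>)"

definition E_eta :: "real \<Rightarrow> real \<Rightarrow> real" where
  "E_eta \<eta> \<theta> = (r_eta \<eta> \<theta> + 1 / r_eta \<eta> \<theta>) * cos \<theta>"

end

theory Submission
  imports Defs "HOL-Complex_Analysis.Complex_Analysis" "HOL-Real_Asymp.Real_Asymp"
begin


definition Rf :: "real \<Rightarrow> real \<Rightarrow> real" where
  "Rf \<eta> t = -2 * sin t / (\<eta> + sqrt (\<eta>\<^sup>2 + 4 * (sin t)\<^sup>2))"
definition Ef :: "real \<Rightarrow> real \<Rightarrow> real" where
  "Ef \<eta> t = - cos t * sqrt (\<eta>\<^sup>2 + 4 * (sin t)\<^sup>2) / sin t"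
definition Ed :: "real \<Rightarrow> real \<Rightarrow> real" where
  "Ed \<eta> t = (\<eta>\<^sup>2 + 4 * (sin t)^4) / ((sin t)\<^sup>2 * sqrt (\<eta>\<^sup>2 + 4 * (sin t)\<^sup>2))"

lemma q_facts:
  assumes "\<eta> > 0"
  shows "sqrt (\<eta>\<^sup>2 + 4 * (sin t)\<^sup>2) > 0" "(sqrt (\<eta>\<^sup>2 + 4 * (sin t)\<^sup>2))\<^sup>2 = \<eta>\<^sup>2 + 4 * (sin t)\<^sup>2"
    "\<eta> + sqrt (\<eta>\<^sup>2 + 4 * (sin t)\<^sup>2) > 0"
  using assms by (auto intro!: add_pos_nonneg)

lemma r_eta_eq:
  assumes "\<eta> > 0"
  shows "r_eta \<eta> t = Rf \<eta> t"
proof (cases "sin t = 0")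
  case True then show ?thesis by (simp add: r_eta_def Rf_def)
next
  case False
  define q where "q = sqrt (\<eta>\<^sup>2 + 4 * (sin t)\<^sup>2)"
  have q: "q > 0" "q\<^sup>2 = \<eta>\<^sup>2 + 4 * (sin t)\<^sup>2" "\<eta> + q > 0" using q_facts[OF assms] by (auto simp: q_def)
  have "(\<eta> - q) / (2 * sin t) = -2 * sin t / (\<eta> + q)"
    using q False by (simp add: field_simps power2_eq_square)
  then show ?thesis by (simp add: r_eta_def Rf_def q_def)
qed

lemma Rf_sums:
  assumes "\<eta> > 0" "sin t \<noteq> 0"
  shows "Rf \<eta> t + 1 / Rf \<eta> t = - sqrt (\<eta>\<^sup>2 + 4 * (sin t)\<^sup>2) / sin t"
    "Rf \<eta> t - 1 / Rf \<eta> t = \<eta> / sin t"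
    "Rf \<eta> t \<noteq> 0"
proof -
  define q where "q = sqrt (\<eta>\<^sup>2 + 4 * (sin t)\<^sup>2)"
  have q: "q > 0" "q\<^sup>2 = \<eta>\<^sup>2 + 4 * (sin t)\<^sup>2" "\<eta> + q > 0" using q_facts[OF assms(1)] by (auto simp: q_def)
  show "Rf \<eta> t \<noteq> 0" using assms q by (simp add: Rf_def q_def)
  have s: "sin t \<noteq> 0" by fact
  have d: "(\<eta> + q) \<noteq> 0" using q by simp
  have A: "Rf \<eta> t = -2 * sin t / (\<eta> + q)" by (simp add: Rf_def q_def)
  have B: "1 / Rf \<eta> t = - (\<eta> + q) / (2 * sin t)" unfolding A using s d by (simp add: field_simps)
  have "-2 * sin t / (\<eta> + q) + - (\<eta> + q) / (2 * sin t) = (-4 * (sin t)^2 - (\<eta>+q)^2) / (2 * sin t * (\<eta>+q))"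
    using s d by (simp add: field_simps power2_eq_square)
  also have "(-4 * (sin t)^2 - (\<eta>+q)^2) = -2 * q * (\<eta> + q)" using q(2) by (simp add: power2_eq_square algebra_simps)
  also have "-2 * q * (\<eta> + q) / (2 * sin t * (\<eta>+q)) = - q / sin t" using s d by (simp add: divide_simps; simp add: algebra_simps)
  finally have C: "-2 * sin t / (\<eta> + q) + - (\<eta> + q) / (2 * sin t) = - q / sin t" .
  show "Rf \<eta> t + 1 / Rf \<eta> t = - sqrt (\<eta>\<^sup>2 + 4 * (sin t)\<^sup>2) / sin t"
    unfolding B unfolding A unfolding q_def[symmetric] by (rule C)
  have "-2 * sin t / (\<eta> + q) - - (\<eta> + q) / (2 * sin t) = (-4 * (sin t)^2 + (\<eta>+q)^2) / (2 * sin t * (\<eta>+q))"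
    using s d by (simp add: field_simps power2_eq_square)
  also have "(-4 * (sin t)^2 + (\<eta>+q)^2) = 2 * \<eta> * (\<eta> + q)" using q(2) by (simp add: power2_eq_square algebra_simps)
  also have "2 * \<eta> * (\<eta> + q) / (2 * sin t * (\<eta>+q)) = \<eta> / sin t" using s d by (simp add: divide_simps; simp add: algebra_simps)
  finally have C: "-2 * sin t / (\<eta> + q) - - (\<eta> + q) / (2 * sin t) = \<eta> / sin t" .
  show "Rf \<eta> t - 1 / Rf \<eta> t = \<eta> / sin t"
    unfolding B unfolding A by (rule C)
qed

lemma E_eta_eq:
  assumes "\<eta> > 0"
  shows "E_eta \<eta> t = Ef \<eta> t"
proof (cases "sin t = 0")
  case True then show ?thesis by (simp add: E_eta_def r_eta_def Ef_def)
next
  case False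
  then show ?thesis using Rf_sums[OF assms False]
    by (simp add: E_eta_def r_eta_eq[OF assms] Ef_def)
qed

lemma Ed_alg: fixes s c q \<eta> :: real
  assumes "q > 0" "q\<^sup>2 = \<eta>\<^sup>2 + 4 * s\<^sup>2" "s\<^sup>2 + c\<^sup>2 = 1" "s \<noteq> 0"
  shows "((- (- s) * q + inverse q / 2 * (4 * (2 * s * c)) * - c) * s - - c * q * c) / (s * s) = (\<eta>\<^sup>2 + 4 * s^4) / (s\<^sup>2 * q)"
proof -
  have N1: "((- (- s) * q + inverse q / 2 * (4 * (2 * s * c)) * - c) * s - - c * q * c) = (q\<^sup>2 * (s\<^sup>2 + c\<^sup>2) - 4 * s\<^sup>2 * c\<^sup>2) / q"
    using assms by (simp add: field_simps power2_eq_square) algebra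
  have N2: "q\<^sup>2 * (s\<^sup>2 + c\<^sup>2) - 4 * s\<^sup>2 * c\<^sup>2 = \<eta>\<^sup>2 + 4 * s^4"
    using assms(2,3) by algebra
  show ?thesis unfolding N1 N2 using assms by (simp add: field_simps power2_eq_square)
qed

lemma Ef_deriv:
  assumes "\<eta> > 0" "sin t \<noteq> 0"
  shows "(Ef \<eta> has_real_derivative Ed \<eta> t) (at t)"
proof -
  define q where "q = sqrt (\<eta>\<^sup>2 + 4 * (sin t)\<^sup>2)"
  have q: "q > 0" "q\<^sup>2 = \<eta>\<^sup>2 + 4 * (sin t)\<^sup>2" using q_facts[OF assms(1)] by (auto simp: q_def)
  have dq: "((\<lambda>t. sqrt (\<eta>\<^sup>2 + 4 * (sin t)\<^sup>2)) has_real_derivative (inverse q / 2 * (4 * (2 * sin t * cos t)))) (at t)"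
    unfolding q_def
    by (rule DERIV_chain2[OF DERIV_real_sqrt]) (use q_facts[OF assms(1)] in \<open>auto intro!: derivative_eq_intros\<close>)
  have "(Ef \<eta> has_real_derivative Ed \<eta> t) (at t)"
    unfolding Ef_def
    apply (rule DERIV_cong)
    apply (rule DERIV_divide DERIV_mult DERIV_minus DERIV_sin DERIV_cos dq)+
    using assms(2) apply simp
    unfolding Ed_def q_def[symmetric]
    apply (rule Ed_alg) using q assms by simp_all

  then show ?thesis .
qed

lemma csqrt_upper:
  assumes "Im z > 0"
  shows "Re (csqrt z) > 0" "Im (csqrt z) > 0"
proof -
  have "\<bar>Re z\<bar> < cmod z"
  proof -
    have "\<bar>Re z\<bar> = sqrt ((Re z)\<^sup>2)" by simp
    also have "\<dots> < sqrt ((Re z)\<^sup>2 + (Im z)\<^sup>2)" using assms by (intro real_sqrt_less_mono) simp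
    finally show ?thesis by (simp add: cmod_def)
  qed
  then show "Re (csqrt z) > 0" "Im (csqrt z) > 0" using assms by auto
qed

lemma msc_root: "msc z * (z - msc z) = 1"
proof -
  have a: "csqrt (z-2) * csqrt (z-2) = z - 2" using power2_csqrt[of "z-2"] by (simp only: power2_eq_square)
  have b: "csqrt (z+2) * csqrt (z+2) = z + 2" using power2_csqrt[of "z+2"] by (simp only: power2_eq_square)
  show ?thesis unfolding msc_def
    by (simp add: field_simps) (use a b in algebra)
qed

lemma msc_Im_S:
  assumes "Im z > 0"
  shows "Im (csqrt (z - 2) * csqrt (z + 2)) > 0"
proof -
  have a: "Im (z - 2) > 0" "Im (z + 2) > 0" using assms by auto
  show ?thesis using csqrt_upper[OF a(1)] csqrt_upper[OF a(2)]
    by (simp add: add_pos_pos)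
qed

lemma w_root:
  fixes R c s :: real
  assumes "R \<noteq> 0" "s\<^sup>2 + c\<^sup>2 = 1"
  shows "(Complex (R * c) (R * s))\<^sup>2 - Complex ((R + 1/R) * c) ((R - 1/R) * s) * Complex (R * c) (R * s) + 1 = 0"
  using assms by (simp add: complex_eq_iff power2_eq_square field_simps) algebra

lemma msc_param:
  assumes "\<eta> > 0" "-pi < t" "t < 0"
  shows "msc (Complex (Ef \<eta> t) \<eta>) = of_real (Rf \<eta> t) * exp (\<i> * of_real t)"
proof -
  have s: "sin t < 0" using assms sin_gt_zero[of "-t"] by simp
  define R where "R = Rf \<eta> t"
  have R: "R > 0" using s q_facts[OF assms(1), of t] by (simp add: R_def Rf_def divide_neg_pos)
  note RS = Rf_sums[OF assms(1), of t, folded R_def]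
  define w where "w = Complex (R * cos t) (R * sin t)"
  define z where "z = Complex (Ef \<eta> t) \<eta>"
  have z: "z = Complex ((R + 1/R) * cos t) ((R - 1/R) * sin t)"
    using RS s by (simp add: z_def Ef_def)
  have wr: "w\<^sup>2 - z * w + 1 = 0" unfolding z w_def by (rule w_root) (use R in auto)
  define m where "m = msc z"
  have mr: "m * (z - m) = 1" unfolding m_def by (rule msc_root)
  have "(m - w) * (m + w - z) = 0" using wr mr by (simp add: algebra_simps power2_eq_square)
  then have "m = w \<or> m = z - w" by auto
  moreover have "m \<noteq> z - w"
  proof
    assume mzw: "m = z - w"
    have "csqrt (z - 2) * csqrt (z + 2) = z - 2 * m" by (simp add: m_def msc_def field_simps)
    then have "Im (csqrt (z - 2) * csqrt (z + 2)) = 2 * R * sin t - \<eta>" using mzw by (simp add: z_def w_def)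
    moreover have "Im (csqrt (z - 2) * csqrt (z + 2)) > 0" by (rule msc_Im_S) (use assms in \<open>simp add: z_def\<close>)
    moreover have "R * sin t < 0" using R s by (simp add: mult_pos_neg)
    ultimately show False using assms(1) by linarith
  qed
  ultimately have "m = w" by blast
  moreover have "of_real R * exp (\<i> * of_real t) = w"
    by (simp add: w_def cis_conv_exp[symmetric] complex_eq_iff)
  ultimately show ?thesis by (simp add: m_def z_def R_def)
qed

lemma msc_den_nz:
  assumes "\<eta> > 0"
  shows "1 - (complex_of_real u)\<^sup>2 * (msc (Complex x \<eta>))\<^sup>2 \<noteq> 0"
proof
  define z where "z = Complex x \<eta>"
  define m where "m = msc z"
  assume "1 - (complex_of_real u)\<^sup>2 * (msc (Complex x \<eta>))\<^sup>2 = 0"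
  then have "(complex_of_real u * m)\<^sup>2 = 1" by (simp add: m_def z_def power_mult_distrib)
  then have "complex_of_real u * m = 1 \<or> complex_of_real u * m = -1" by (simp add: power2_eq_1_iff)
  moreover have u0: "u \<noteq> 0" using calculation by auto
  ultimately have "m = of_real (1/u) \<or> m = of_real (-1/u)" by (auto simp: field_simps)
  then obtain r where r: "m = of_real r" "r \<noteq> 0" using u0 by (metis divide_eq_0_iff neg_equal_0_iff_equal zero_neq_one)
  have "m * (z - m) = 1" unfolding m_def by (rule msc_root)
  then have "Im (m * (z - m)) = 0" by simp
  then have "r * \<eta> = 0" using r by (simp add: z_def)
  then show False using r assms by simp
qed

lemma msc_holo: "msc holomorphic_on {z. Im z > 0}"
proof -
  have "(\<lambda>z. (z - csqrt (z - 2) * csqrt (z + 2)) / 2) holomorphic_on {z. Im z > 0}"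
    by (intro holomorphic_intros) (auto simp: complex_nonpos_Reals_iff)
  then show ?thesis by (simp add: msc_def[abs_def])
qed

lemma open_upper: "open {z. Im z > 0}"
  by (simp add: open_halfspace_Im_gt)

lemma msc_deriv:
  assumes "Im z > 0"
  shows "(msc has_field_derivative deriv msc z) (at z)"
  by (rule holomorphic_derivI[OF msc_holo open_upper]) (use assms in simp)

lemma deriv_msc_cont:
  assumes "Im z > 0"
  shows "isCont (deriv msc) z"
proof -
  have "deriv msc holomorphic_on {z. Im z > 0}" by (rule holomorphic_deriv[OF msc_holo open_upper])
  then have "continuous_on {z. Im z > 0} (deriv msc)" by (rule holomorphic_on_imp_continuous_on)
  then show ?thesis using assms open_upper continuous_on_eq_continuous_at by blast
qed

lemma msc_cont:
  assumes "Im z > 0"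
  shows "isCont msc z"
  using msc_deriv[OF assms] DERIV_isCont by blast


lemma dq_deriv:
  assumes "\<eta> > 0"
  shows "((\<lambda>t. sqrt (\<eta>\<^sup>2 + 4 * (sin t)\<^sup>2)) has_real_derivative
     (inverse (sqrt (\<eta>\<^sup>2 + 4 * (sin t)\<^sup>2)) / 2 * (4 * (2 * sin t * cos t)))) (at t)"
  by (rule DERIV_chain2[OF DERIV_real_sqrt]) (use q_facts[OF assms(1)] in \<open>auto intro!: derivative_eq_intros\<close>)

definition Rd :: "real \<Rightarrow> real \<Rightarrow> real" where
  "Rd \<eta> t = ((-2 * cos t) * (\<eta> + sqrt (\<eta>\<^sup>2 + 4 * (sin t)\<^sup>2)) - (-2 * sin t) *
      (inverse (sqrt (\<eta>\<^sup>2 + 4 * (sin t)\<^sup>2)) / 2 * (4 * (2 * sin t * cos t))))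
     / ((\<eta> + sqrt (\<eta>\<^sup>2 + 4 * (sin t)\<^sup>2)) * (\<eta> + sqrt (\<eta>\<^sup>2 + 4 * (sin t)\<^sup>2)))"

lemma Rf_deriv:
  assumes "\<eta> > 0"
  shows "(Rf \<eta> has_real_derivative Rd \<eta> t) (at t)"
  unfolding Rf_def[abs_def]
  apply (rule DERIV_cong)
  apply (rule DERIV_divide DERIV_cmult DERIV_sin DERIV_add DERIV_const dq_deriv[OF assms])+
  using q_facts[OF assms, of t] apply simp
  by (simp add: Rd_def)

lemma Rd_cont:
  assumes "\<eta> > 0"
  shows "isCont (Rd \<eta>) t"
  unfolding Rd_def[abs_def]
  apply (intro continuous_intros)
  using q_facts(1,3)[OF assms, of t] by auto

definition Wf :: "real \<Rightarrow> real \<Rightarrow> real \<Rightarrow> complex" where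
  "Wf u \<eta> t = 1 - (complex_of_real u)\<^sup>2 * (complex_of_real ((Rf \<eta> t)\<^sup>2) * exp (2 * \<i> * complex_of_real t))"

definition Wd :: "real \<Rightarrow> real \<Rightarrow> real \<Rightarrow> complex" where
  "Wd u \<eta> t = - ((complex_of_real u)\<^sup>2 * (complex_of_real ((Rf \<eta> t)\<^sup>2) * (exp (2 * \<i> * complex_of_real t) * (2 * \<i>))
      + complex_of_real (2 * Rf \<eta> t * Rd \<eta> t) * exp (2 * \<i> * complex_of_real t)))"

lemma Wf_deriv:
  assumes "\<eta> > 0"
  shows "(Wf u \<eta> has_vector_derivative Wd u \<eta> t) (at t)"
proof -
  have r2: "((\<lambda>t. (Rf \<eta> t)\<^sup>2) has_real_derivative 2 * Rf \<eta> t * Rd \<eta> t) (at t)"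
    using DERIV_power[OF Rf_deriv[OF assms], of 2 t] by (simp add: mult_ac)
  have e: "((\<lambda>t. exp (2 * \<i> * complex_of_real t)) has_vector_derivative (exp (2 * \<i> * complex_of_real t) * (2 * \<i>))) (at t)"
    by (rule has_vector_derivative_real_field) (auto intro!: derivative_eq_intros)
  show ?thesis unfolding Wf_def[abs_def]
    apply (rule has_vector_derivative_eq_rhs)
    apply (rule has_vector_derivative_diff has_vector_derivative_const has_vector_derivative_mult_right
       has_vector_derivative_mult has_vector_derivative_of_real r2 e)+
    by (simp add: Wd_def)
qed

lemma Wd_cont:
  assumes "\<eta> > 0"
  shows "isCont (Wd u \<eta>) t"
proof -
  have "isCont (Rf \<eta>) t" using Rf_deriv[OF assms] DERIV_isCont by blast
  then show ?thesis unfolding Wd_def[abs_def]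
    by (intro continuous_intros Rd_cont assms)
qed

lemma Wf_cont:
  assumes "\<eta> > 0"
  shows "isCont (Wf u \<eta>) t"
  using Wf_deriv[OF assms] has_vector_derivative_continuous by blast

lemma Rf_zero: "sin t = 0 \<Longrightarrow> Rf \<eta> t = 0"
  by (simp add: Rf_def)

lemma Wf_notin:
  assumes "\<eta> > 0"
  shows "Wf u \<eta> t \<notin> \<real>\<^sub>\<le>\<^sub>0"
proof
  assume a: "Wf u \<eta> t \<in> \<real>\<^sub>\<le>\<^sub>0"
  define R where "R = Rf \<eta> t"
  have W: "Wf u \<eta> t = 1 - complex_of_real (u\<^sup>2 * R\<^sup>2) * cis (2 * t)"
    by (simp add: Wf_def R_def cis_conv_exp mult_ac)
  have re: "1 - u\<^sup>2 * R\<^sup>2 * cos (2 * t) \<le> 0" and im: "u\<^sup>2 * R\<^sup>2 * sin (2 * t) = 0"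
    using a unfolding W complex_nonpos_Reals_iff by auto
  have nz: "u\<^sup>2 * R\<^sup>2 \<noteq> 0" using re by auto
  then have "sin (2 * t) = 0" using im by simp
  then have "sin t = 0 \<or> cos t = 0" by (simp add: sin_double)
  moreover have "sin t \<noteq> 0" using nz Rf_zero[of t \<eta>] by (auto simp: R_def)
  ultimately have "cos t = 0" by simp
  then have "cos (2 * t) = -1" using sin_cos_squared_add[of t] by (simp add: cos_double)
  then have "1 + u\<^sup>2 * R\<^sup>2 \<le> 0" using re by simp
  moreover have "u\<^sup>2 * R\<^sup>2 \<ge> 0" by simp
  ultimately show False by linarith
qed

lemma Wf_nz:
  assumes "\<eta> > 0"
  shows "Wf u \<eta> t \<noteq> 0"
  using Wf_notin[OF assms, of u t] by (force simp: complex_nonpos_Reals_iff)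

lemma h_eq:
  assumes "\<eta> > 0"
  shows "(\<lambda>t. Arg (1 - (complex_of_real u)\<^sup>2 * (complex_of_real (r_eta \<eta> t))\<^sup>2
                               * exp (2 * \<i> * complex_of_real t))) = (\<lambda>t. Im (Ln (Wf u \<eta> t)))"
proof
  fix t
  have "1 - (complex_of_real u)\<^sup>2 * (complex_of_real (r_eta \<eta> t))\<^sup>2 * exp (2 * \<i> * complex_of_real t) = Wf u \<eta> t"
    by (simp add: Wf_def r_eta_eq[OF assms] mult.assoc)
  then show "Arg (1 - (complex_of_real u)\<^sup>2 * (complex_of_real (r_eta \<eta> t))\<^sup>2 * exp (2 * \<i> * complex_of_real t)) = Im (Ln (Wf u \<eta> t))"
    using Arg_eq_Im_Ln[OF Wf_nz[OF assms]] by simp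
qed

lemma LnW_deriv:
  assumes "\<eta> > 0"
  shows "((\<lambda>t. Ln (Wf u \<eta> t)) has_vector_derivative (Wd u \<eta> t * inverse (Wf u \<eta> t))) (at t)"
  using field_vector_diff_chain_at[OF Wf_deriv[OF assms] has_field_derivative_Ln[OF Wf_notin[OF assms]]]
  by (simp add: o_def)

lemma h_deriv:
  assumes "\<eta> > 0"
  shows "deriv (\<lambda>t. Arg (1 - (complex_of_real u)\<^sup>2 * (complex_of_real (r_eta \<eta> t))\<^sup>2
                               * exp (2 * \<i> * complex_of_real t))) t = Im (Wd u \<eta> t * inverse (Wf u \<eta> t))"
  unfolding h_eq[OF assms]
  by (rule DERIV_imp_deriv, rule has_field_derivative_Im, rule LnW_deriv[OF assms])

lemma hd_cont:
  assumes "\<eta> > 0"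
  shows "continuous_on UNIV (\<lambda>t. Im (Wd u \<eta> t * inverse (Wf u \<eta> t)))"
proof -
  have 1: "continuous_on UNIV (Wd u \<eta>)" by (intro continuous_at_imp_continuous_on ballI Wd_cont assms)
  have 2: "continuous_on UNIV (Wf u \<eta>)" by (intro continuous_at_imp_continuous_on ballI Wf_cont assms)
  show ?thesis
    by (intro continuous_on_Im continuous_on_mult continuous_on_inverse 1 2) (auto simp: Wf_nz assms)
qed




lemma Im_ofreal_div: "Im (complex_of_real a * X / D) = a * Im (X / D)"
proof -
  have "complex_of_real a * X / D = complex_of_real a * (X / D)" by simp
  moreover have "Im (complex_of_real a * Z) = a * Im Z" for Z by (simp only: times_complex.sel Re_complex_of_real Im_complex_of_real mult_zero_left add_0_right)
  ultimately show ?thesis by metis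
qed

definition Lf :: "real \<Rightarrow> real \<Rightarrow> real \<Rightarrow> real" where
  "Lf u \<eta> x = Im (2 * (complex_of_real u)\<^sup>2 * msc (Complex x \<eta>) * deriv msc (Complex x \<eta>)
            / (1 - (complex_of_real u)\<^sup>2 * (msc (Complex x \<eta>))\<^sup>2))"

lemma F_deriv:
  assumes "Im z > 0" "1 - U * (msc z)\<^sup>2 \<notin> \<real>\<^sub>\<le>\<^sub>0"
  shows "((\<lambda>z. Ln (1 - U * (msc z)\<^sup>2)) has_field_derivative
           (- (2 * U * msc z * deriv msc z / (1 - U * (msc z)\<^sup>2)))) (at z)"
proof -
  have d1: "((\<lambda>z. 1 - U * (msc z)\<^sup>2) has_field_derivative (- (U * (2 * msc z * deriv msc z)))) (at z)"
    apply (rule DERIV_cong)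
    apply (rule DERIV_diff DERIV_const DERIV_cmult DERIV_power msc_deriv[OF assms(1)])+
    by simp
  have nz: "1 - U * (msc z)\<^sup>2 \<noteq> 0" using assms(2) by auto
  show ?thesis
    apply (rule DERIV_cong)
    apply (rule DERIV_chain2[OF has_field_derivative_Ln[OF assms(2)] d1])
    using nz by (simp add: field_simps)
qed

lemma Wf_on:
  assumes "\<eta> > 0" "-pi < t" "t < 0"
  shows "Wf u \<eta> t = 1 - (complex_of_real u)\<^sup>2 * (msc (Complex (Ef \<eta> t) \<eta>))\<^sup>2"
proof -
  have e: "(exp (\<i> * complex_of_real t))\<^sup>2 = exp (2 * \<i> * complex_of_real t)"
    by (metis exp_of_nat_mult of_nat_numeral mult.assoc)
  show ?thesis unfolding msc_param[OF assms] Wf_def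
    by (simp add: power_mult_distrib e)
qed

lemma key:
  assumes "\<eta> > 0" "-pi < t" "t < 0"
  shows "Im (Wd u \<eta> t * inverse (Wf u \<eta> t)) = - Ed \<eta> t * Lf u \<eta> (Ef \<eta> t)"
proof -
  define U where "U = (complex_of_real u)\<^sup>2"
  define \<gamma> where "\<gamma> = (\<lambda>t. Complex (Ef \<eta> t) \<eta>)"
  define F where "F = (\<lambda>z. Ln (1 - U * (msc z)\<^sup>2))"
  define F' where "F' = (\<lambda>z. - (2 * U * msc z * deriv msc z / (1 - U * (msc z)\<^sup>2)))"
  have st: "sin t \<noteq> 0" using assms sin_gt_zero[of "-t"] by auto
  have g: "\<gamma> = (\<lambda>t. complex_of_real (Ef \<eta> t) + \<i> * complex_of_real \<eta>)"
    by (simp add: \<gamma>_def Complex_eq)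
  have dg: "(\<gamma> has_vector_derivative complex_of_real (Ed \<eta> t)) (at t)"
    unfolding g
    apply (rule has_vector_derivative_eq_rhs)
    apply (rule has_vector_derivative_add has_vector_derivative_const has_vector_derivative_of_real Ef_deriv[OF assms(1) st])+
    by simp
  have Wt: "1 - U * (msc (\<gamma> t))\<^sup>2 = Wf u \<eta> t" using Wf_on[OF assms] by (simp add: U_def \<gamma>_def)
  have dF: "(F has_field_derivative F' (\<gamma> t)) (at (\<gamma> t))"
    unfolding F_def F'_def
    by (rule F_deriv) (use Wt Wf_notin[OF assms(1)] assms(1) in \<open>auto simp: \<gamma>_def\<close>)
  have c1: "((F \<circ> \<gamma>) has_vector_derivative (complex_of_real (Ed \<eta> t) * F' (\<gamma> t))) (at t)"
    by (rule field_vector_diff_chain_at[OF dg dF])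
  have c2: "((\<lambda>t. Ln (Wf u \<eta> t)) has_vector_derivative (complex_of_real (Ed \<eta> t) * F' (\<gamma> t))) (at t)"
  proof (rule has_vector_derivative_transform_within_open[OF c1, of "{-pi<..<0}"])
    show "open {-pi<..<(0::real)}" by simp
    show "t \<in> {-pi<..<0}" using assms by simp
    fix y :: real assume "y \<in> {-pi<..<0}"
    then show "(F \<circ> \<gamma>) y = Ln (Wf u \<eta> y)"
      using Wf_on[OF assms(1), of y] by (simp add: F_def \<gamma>_def U_def)
  qed
  have "Wd u \<eta> t * inverse (Wf u \<eta> t) = complex_of_real (Ed \<eta> t) * F' (\<gamma> t)"
    by (rule vector_derivative_unique_at[OF LnW_deriv[OF assms(1)] c2])
  then show ?thesis
    by (simp add: F'_def Lf_def U_def \<gamma>_def Im_ofreal_div)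
qed



lemma Ef_lim_bot:
  assumes "\<eta> > 0"
  shows "filterlim (Ef \<eta>) at_bot (at_right (-pi))"
  unfolding Ef_def using assms by real_asymp

lemma Ef_lim_top:
  assumes "\<eta> > 0"
  shows "filterlim (Ef \<eta>) at_top (at_left 0)"
  unfolding Ef_def using assms by real_asymp

lemma sin_neg_interval: "-pi < t \<Longrightarrow> t < 0 \<Longrightarrow> sin t \<noteq> 0"
  using sin_gt_zero[of "-t"] by auto

lemma Ed_nonneg:
  assumes "\<eta> > 0"
  shows "Ed \<eta> t \<ge> 0"
  unfolding Ed_def by (intro divide_nonneg_nonneg) auto

lemma Ed_cont:
  assumes "\<eta> > 0" "sin t \<noteq> 0"
  shows "isCont (Ed \<eta>) t"
  unfolding Ed_def[abs_def]
  apply (intro continuous_intros)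
  using q_facts(1)[OF assms(1), of t] assms(2) by auto

lemma Lf_cont:
  assumes "\<eta> > 0"
  shows "isCont (Lf u \<eta>) x"
proof -
  have c: "isCont (\<lambda>x. Complex x \<eta>) x" unfolding Complex_eq by (intro continuous_intros)
  have m: "isCont (\<lambda>x. msc (Complex x \<eta>)) x" by (rule isCont_o2[OF c msc_cont]) (use assms in simp)
  have d: "isCont (\<lambda>x. deriv msc (Complex x \<eta>)) x" by (rule isCont_o2[OF c deriv_msc_cont]) (use assms in simp)
  have G: "isCont (\<lambda>x. 2 * (complex_of_real u)\<^sup>2 * msc (Complex x \<eta>) * deriv msc (Complex x \<eta>)
            / (1 - (complex_of_real u)\<^sup>2 * (msc (Complex x \<eta>))\<^sup>2)) x"
    by (intro continuous_intros m d msc_den_nz assms)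
  show ?thesis unfolding Lf_def[abs_def]
    by (rule isCont_Im[OF G])
qed

theorem lemma5p1:
  fixes \<psi> :: "real \<Rightarrow> real" and u \<eta> :: real
  assumes "continuous_on UNIV \<psi>" and "bounded (range \<psi>)"
    and "u > 0" and "\<eta> > 0"
  shows "(\<integral>x. (1 / pi) * Im (2 * (complex_of_real u)\<^sup>2 * msc (Complex x \<eta>) * deriv msc (Complex x \<eta>)
            / (1 - (complex_of_real u)\<^sup>2 * (msc (Complex x \<eta>))\<^sup>2)) * \<psi> x \<partial>lborel)
       = - (1 / pi) * (LBINT \<theta>=-pi..0. \<psi> (E_eta \<eta> \<theta>) *
            deriv (\<lambda>t. Arg (1 - (complex_of_real u)\<^sup>2 * (complex_of_real (r_eta \<eta> t))\<^sup>2
                               * exp (2 * \<i> * complex_of_real t))) \<theta>)"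
proof -
  note eta = assms(4)
  define f where "f = (\<lambda>x. Lf u \<eta> x * \<psi> x)"
  obtain B where B: "\<And>x. \<bar>\<psi> x\<bar> \<le> B" using assms(2) unfolding bounded_iff by auto
  have B0: "B \<ge> 0" using B[of 0] by simp
  have psic: "isCont \<psi> x" for x using assms(1) by (simp add: continuous_on_eq_continuous_at)
  have fc: "isCont f x" for x unfolding f_def by (intro continuous_intros Lf_cont eta psic)
  have fm: "f \<in> borel_measurable borel"
    by (rule borel_measurable_continuous_onI) (simp add: continuous_at_imp_continuous_on fc)
  define K where "K = (\<lambda>t. Im (Wd u \<eta> t * inverse (Wf u \<eta> t)))"
  have Kc: "continuous_on UNIV K" unfolding K_def by (rule hd_cont[OF eta])
  have keyK: "K t = - Ed \<eta> t * Lf u \<eta> (Ef \<eta> t)" if "-pi < t" "t < 0" for t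
    unfolding K_def by (rule key[OF eta that])
  have Efc: "isCont (Ef \<eta>) t" if "-pi < t" "t < 0" for t
    using DERIV_isCont[OF Ef_deriv[OF eta sin_neg_interval[OF that]]] .
  have Edc: "isCont (Ed \<eta>) t" if "-pi < t" "t < 0" for t
    by (rule Ed_cont[OF eta sin_neg_interval[OF that]])
  have I1: "set_integrable lborel {-pi<..<0} (\<lambda>t. Ed \<eta> t *\<^sub>R f (Ef \<eta> t))"
  proof (rule set_integrable_bound[where f = "\<lambda>t. B * K t"])
    have "set_integrable lborel {-pi..0} (\<lambda>t. B * K t)"
      unfolding set_integrable_def
      by (rule borel_integrable_compact) (auto intro!: continuous_on_mult continuous_on_const continuous_on_subset[OF Kc])
    then show "set_integrable lborel {-pi<..<0} (\<lambda>t. B * K t)"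
      by (rule set_integrable_subset) auto
    have "continuous_on {-pi<..<0} (\<lambda>t. Ed \<eta> t *\<^sub>R f (Ef \<eta> t))"
      by (intro continuous_at_imp_continuous_on ballI continuous_intros Edc isCont_o2[OF Efc fc]) auto
    then show "set_borel_measurable lborel {-pi<..<0} (\<lambda>t. Ed \<eta> t *\<^sub>R f (Ef \<eta> t))"
      unfolding set_borel_measurable_def measurable_lborel2
      by (intro borel_measurable_continuous_on_indicator) auto
    show "AE x in lborel. x \<in> {-pi<..<0} \<longrightarrow> norm (Ed \<eta> x *\<^sub>R f (Ef \<eta> x)) \<le> norm (B * K x)"
    proof (rule AE_I2, rule impI)
      fix x assume x: "x \<in> {-pi<..<(0::real)}"
      have "norm (Ed \<eta> x *\<^sub>R f (Ef \<eta> x)) = \<bar>K x\<bar> * \<bar>\<psi> (Ef \<eta> x)\<bar>"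
        using keyK[of x] x by (simp add: f_def abs_mult)
      also have "\<dots> \<le> \<bar>K x\<bar> * B" by (rule mult_left_mono[OF B]) simp
      also have "\<dots> = norm (B * K x)" using B0 by (simp add: abs_mult)
      finally show "norm (Ed \<eta> x *\<^sub>R f (Ef \<eta> x)) \<le> norm (B * K x)" .
    qed
  qed
  have A1: "((ereal \<circ> Ef \<eta> \<circ> real_of_ereal) \<longlongrightarrow> - \<infinity>) (at_right (ereal (-pi)))"
    by (simp add: ereal_tendsto_simps Ef_lim_bot[OF eta])
  have A2: "((ereal \<circ> Ef \<eta> \<circ> real_of_ereal) \<longlongrightarrow> \<infinity>) (at_left (ereal 0))"
    by (simp add: ereal_tendsto_simps Ef_lim_top[OF eta])
  have I1': "set_integrable lborel (einterval (ereal (-pi)) (ereal 0)) (\<lambda>t. \<bar>f (Ef \<eta> t)\<bar> * Ed \<eta> t)"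
  proof -
    have "set_integrable lborel {-pi<..<0} (\<lambda>t. \<bar>Ed \<eta> t *\<^sub>R f (Ef \<eta> t)\<bar>)"
      by (rule set_integrable_abs[OF I1])
    moreover have "\<bar>Ed \<eta> t *\<^sub>R f (Ef \<eta> t)\<bar> = \<bar>f (Ef \<eta> t)\<bar> * Ed \<eta> t" for t
      using Ed_nonneg[OF eta, of t] by (simp add: abs_mult)
    ultimately show ?thesis by simp
  qed
  have I2abs: "set_integrable lborel (einterval (-\<infinity>) \<infinity>) (\<lambda>x. \<bar>f x\<bar>)"
    by (rule interval_integral_substitution_nonneg(1)[of "ereal (-pi)" "ereal 0" "Ef \<eta>" "Ed \<eta>"])
       (use I1' in \<open>auto intro!: Ef_deriv[OF eta] continuous_intros fc Edc Ed_nonneg[OF eta] A1 A2 simp: sin_neg_interval\<close>)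
  have I2: "set_integrable lborel (einterval (-\<infinity>) \<infinity>) f"
    using I2abs set_integrable_abs_iff'[of f lborel "einterval (-\<infinity>) \<infinity>"] fm by simp
  have S: "(LBINT x=-\<infinity>..\<infinity>. f x) = (LBINT x=ereal (-pi)..ereal 0. Ed \<eta> x *\<^sub>R f (Ef \<eta> x))"
    by (rule interval_integral_substitution_integrable)
       (use I1 I2 in \<open>auto intro!: Ef_deriv[OF eta] continuous_intros fc Edc Ed_nonneg[OF eta] A1 A2 simp: sin_neg_interval\<close>)
  have L: "(\<integral>x. (1 / pi) * Im (2 * (complex_of_real u)\<^sup>2 * msc (Complex x \<eta>) * deriv msc (Complex x \<eta>)
            / (1 - (complex_of_real u)\<^sup>2 * (msc (Complex x \<eta>))\<^sup>2)) * \<psi> x \<partial>lborel)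
        = (1 / pi) * (LBINT x=-\<infinity>..\<infinity>. f x)"
    by (simp add: f_def Lf_def mult.assoc interval_lebesgue_integral_def set_lebesgue_integral_def)
  have R: "(LBINT \<theta>=-pi..0. \<psi> (E_eta \<eta> \<theta>) *
            deriv (\<lambda>t. Arg (1 - (complex_of_real u)\<^sup>2 * (complex_of_real (r_eta \<eta> t))\<^sup>2
                               * exp (2 * \<i> * complex_of_real t))) \<theta>)
        = - (LBINT x=ereal (-pi)..ereal 0. Ed \<eta> x *\<^sub>R f (Ef \<eta> x))"
  proof -
    have "(LBINT \<theta>=-pi..0. \<psi> (E_eta \<eta> \<theta>) *
            deriv (\<lambda>t. Arg (1 - (complex_of_real u)\<^sup>2 * (complex_of_real (r_eta \<eta> t))\<^sup>2
                               * exp (2 * \<i> * complex_of_real t))) \<theta>)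
        = (LBINT \<theta>=ereal (-pi)..ereal 0. \<psi> (Ef \<eta> \<theta>) * K \<theta>)"
      by (simp only: E_eta_eq[OF eta] h_deriv[OF eta] K_def zero_ereal_def)
    also have "\<dots> = (LBINT x=ereal (-pi)..ereal 0. - (Ed \<eta> x *\<^sub>R f (Ef \<eta> x)))"
      by (rule interval_integral_cong) (auto simp: keyK f_def)
    also have "\<dots> = - (LBINT x=ereal (-pi)..ereal 0. Ed \<eta> x *\<^sub>R f (Ef \<eta> x))"
      by (rule interval_lebesgue_integral_uminus)
    finally show ?thesis .
  qed
  show ?thesis unfolding L R S by simp
qed


end
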